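(* Let $\alpha\ge1$ be an ordinal and let $\aleph$ be the cardinality of $\mathrm{Zigzag}_\alpha$. Then every questionable representation of $\mathrm{Zigzag}_\alpha$ has width at least $\aleph$.
   Context: Orders are partial orders. $\mathrm{Zigzag}_\alpha$ is the order on the disjoint elements $s_i,s'_i$ ($i<\alpha$) whose comparabilities are exactly: $s_i<s'_i$ for $i<\alpha$; $s_i<s'_{i+1}$ whenever $i+1<\alpha$; and $s_j<s'_i$ whenever $j<i<\alpha$ and $i$ is a limit ordinal. For an ordinal $j$, $\mathcal O_j=(O_k)_{k<j}$ is a sequence of orders; a word of length $\ell\le j$ is $(x_k)_{k<\ell}$ with $x_k\in\mathrm{Dom}(O_k)$. The question of words $X,Y$ is $(k,x_k,y_k)$ for the least $k<\min(\mathrm{len}X,\mathrm{len}Y)$ with $x_k\neq y_k$, if it exists. For $i<j$, $\mathrm{Next}(i,j,\mathcal O_j)$ is the partial order on words of length $\ell$, $i\le \ell<j$, with $X<Y$ iff their question $(k,x_k,y_k)$ exists and $x_k<y_k$ in $O_k$; otherwise incomparable. A questionable representation of an order $O$ is an injective $f$ into some $\mathrm{Next}(i,j,\mathcal O_j)$ with $f(x)<f(y)\iff x<y$; its width is the supremum of the cardinalities of the $\mathrm{Dom}(O_k)$, $k<j$. *)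

theory Defs
  imports Main
begin



text \<open>An ordinal \<open>\<beta>\<close> is represented as the initial segment \<open>{i. i < b}\<close> of a
  well-ordered type; ordinals below \<open>\<beta>\<close> are the elements \<open>i < b\<close>.\<close>

definition succ_of :: "'i::wellorder \<Rightarrow> 'i \<Rightarrow> bool" where
  "succ_of i i' \<longleftrightarrow> i < i' \<and> \<not> (\<exists>m. i < m \<and> m < i')"

definition is_limit :: "'i::wellorder \<Rightarrow> bool" where
  "is_limit i \<longleftrightarrow> (\<exists>m. m < i) \<and> \<not> (\<exists>m. succ_of m i)"

text \<open>Element \<open>(False, i)\<close> is \<open>s_i\<close>, element \<open>(True, i)\<close> is \<open>s'_i\<close>.\<close>

definition zigzag_dom :: "'i::wellorder \<Rightarrow> (bool \<times> 'i) set" where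
  "zigzag_dom a = UNIV \<times> {i. i < a}"

definition zigzag_less :: "'i::wellorder \<Rightarrow> (bool \<times> 'i) \<Rightarrow> (bool \<times> 'i) \<Rightarrow> bool" where
  "zigzag_less a p q \<longleftrightarrow>
     (\<exists>i i'. p = (False, i) \<and> q = (True, i') \<and> i < a \<and> i' < a \<and>
        (i' = i \<or> succ_of i i' \<or> (i < i' \<and> is_limit i')))"

definition strict_po :: "'a set \<Rightarrow> 'a rel \<Rightarrow> bool" where
  "strict_po D R \<longleftrightarrow> R \<subseteq> D \<times> D \<and> (\<forall>x. (x, x) \<notin> R) \<and> trans R"

text \<open>A sequence of orders \<open>(O_k)_{k<j}\<close> is given by domains \<open>D k\<close> and relations \<open>Ord k\<close>.
  A word of length \<open>l\<close> is a pair \<open>(l, x)\<close> with \<open>x k \<in> D k\<close> for \<open>k < l\<close> and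
  \<open>x k = undefined\<close> for \<open>k \<ge> l\<close> (canonical representative).\<close>

definition is_word :: "('k::wellorder \<Rightarrow> 'a set) \<Rightarrow> 'k \<Rightarrow> ('k \<times> ('k \<Rightarrow> 'a)) \<Rightarrow> bool" where
  "is_word D l w \<longleftrightarrow> fst w = l \<and> (\<forall>k. k < l \<longrightarrow> snd w k \<in> D k)
                      \<and> (\<forall>k. \<not> k < l \<longrightarrow> snd w k = undefined)"

definition next_dom :: "'k::wellorder \<Rightarrow> 'k \<Rightarrow> ('k \<Rightarrow> 'a set) \<Rightarrow> ('k \<times> ('k \<Rightarrow> 'a)) set" where
  "next_dom i j D = {w. \<exists>l. i \<le> l \<and> l < j \<and> is_word D l w}"

definition next_less :: "('k::wellorder \<Rightarrow> 'a rel) \<Rightarrow> ('k \<times> ('k \<Rightarrow> 'a)) \<Rightarrow> ('k \<times> ('k \<Rightarrow> 'a)) \<Rightarrow> bool" where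
  "next_less Ord X Y \<longleftrightarrow>
     (\<exists>k. k < fst X \<and> k < fst Y \<and> snd X k \<noteq> snd Y k
          \<and> (\<forall>m. m < k \<longrightarrow> snd X m = snd Y m)
          \<and> (snd X k, snd Y k) \<in> Ord k)"

definition questionable_rep ::
  "'z set \<Rightarrow> ('z \<Rightarrow> 'z \<Rightarrow> bool) \<Rightarrow> 'k::wellorder \<Rightarrow> 'k \<Rightarrow> ('k \<Rightarrow> 'a set) \<Rightarrow> ('k \<Rightarrow> 'a rel)
     \<Rightarrow> ('z \<Rightarrow> 'k \<times> ('k \<Rightarrow> 'a)) \<Rightarrow> bool" where
  "questionable_rep Z lessZ i j D Ord f \<longleftrightarrow>
     i < j \<and> (\<forall>k. k < j \<longrightarrow> strict_po (D k) (Ord k)) \<and>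
     inj_on f Z \<and> f ` Z \<subseteq> next_dom i j D \<and>
     (\<forall>x\<in>Z. \<forall>y\<in>Z. next_less Ord (f x) (f y) \<longleftrightarrow> lessZ x y)"

text \<open>The width \<open>sup_{k<j} |D k|\<close> is at least the cardinality \<open>|A|\<close>: no cardinal
  strictly below \<open>|A|\<close> (i.e. \<open>|C|\<close> with \<open>C\<close> a set of smaller cardinality) bounds all \<open>|D k|\<close>.\<close>
definition width_at_least :: "'k::wellorder \<Rightarrow> ('k \<Rightarrow> 'a set) \<Rightarrow> 'z set \<Rightarrow> bool" where
  "width_at_least j D A \<longleftrightarrow>
     (\<forall>C :: 'z set. ordLess2 (card_of C) (card_of A) \<longrightarrow> (\<exists>k. k < j \<and> ordLess2 (card_of C) (card_of (D k))))"

end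

theory Submission
  imports Defs
begin

definition wit :: "('k::wellorder \<Rightarrow> 'a rel) \<Rightarrow> ('k \<times> ('k \<Rightarrow> 'a)) \<Rightarrow> ('k \<times> ('k \<Rightarrow> 'a)) \<Rightarrow> 'k \<Rightarrow> bool" where
  "wit Ord X Y k \<longleftrightarrow> k < fst X \<and> k < fst Y \<and> snd X k \<noteq> snd Y k
          \<and> (\<forall>m. m < k \<longrightarrow> snd X m = snd Y m) \<and> (snd X k, snd Y k) \<in> Ord k"

lemma next_less_wit: "next_less Ord X Y \<longleftrightarrow> (\<exists>k. wit Ord X Y k)"
  unfolding next_less_def wit_def by blast

lemma combine1:
  assumes "wit R X Y k1" "wit R X W k2" "k1 < k2" shows "wit R W Y k1"
  using assms unfolding wit_def by (metis dual_order.strict_trans)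

lemma combine2:
  assumes "wit R Y X k1" "wit R W X k2" "k1 < k2" shows "wit R Y W k1"
  using assms unfolding wit_def by (metis dual_order.strict_trans)

lemma zl_dest: "zigzag_less a x y \<Longrightarrow> fst x = False \<and> fst y = True \<and> snd x < a \<and> snd y < a"
  unfolding zigzag_less_def by auto

lemma zl_same: "i < a \<Longrightarrow> zigzag_less a (False, i) (True, i)"
  unfolding zigzag_less_def by auto

lemma zl_ord: "zigzag_less a (False, i) (True, i') \<Longrightarrow> i \<le> i'"
  unfolding zigzag_less_def succ_of_def by auto

locale zz =
  fixes a :: "'i::wellorder"
    and i j :: "'k::wellorder"
    and D :: "'k \<Rightarrow> 'a set"
    and Ord :: "'k \<Rightarrow> 'a rel"
    and f :: "bool \<times> 'i \<Rightarrow> 'k \<times> ('k \<Rightarrow> 'a)"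
  assumes ne: "\<exists>m. m < a"
    and qr: "questionable_rep (zigzag_dom a) (zigzag_less a) i j D Ord f"
begin

lemma inZ: "snd x < a \<Longrightarrow> x \<in> zigzag_dom a"
  unfolding zigzag_dom_def by (cases x) auto

lemma rep: "snd x < a \<Longrightarrow> snd y < a \<Longrightarrow> (\<exists>k. wit Ord (f x) (f y) k) \<longleftrightarrow> zigzag_less a x y"
  using qr inZ unfolding questionable_rep_def next_less_wit by blast

lemma edge: "zigzag_less a x y \<Longrightarrow> \<exists>k. wit Ord (f x) (f y) k"
  using rep zl_dest by blast

lemma vertex_low:
  assumes "zigzag_less a x y" "zigzag_less a x w" "wit Ord (f x) (f y) k1" "wit Ord (f x) (f w) k2"
  shows "k1 = k2"
proof (rule ccontr)
  assume "k1 \<noteq> k2"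
  then consider "k1 < k2" | "k2 < k1" by fastforce
  then show False
  proof cases
    case 1
    then have "wit Ord (f w) (f y) k1" using combine1 assms by blast
    then have "zigzag_less a w y" using rep zl_dest assms by blast
    then show False using zl_dest assms by blast
  next
    case 2
    then have "wit Ord (f y) (f w) k2" using combine1 assms by blast
    then have "zigzag_less a y w" using rep zl_dest assms by blast
    then show False using zl_dest assms by blast
  qed
qed

lemma vertex_high:
  assumes "zigzag_less a y x" "zigzag_less a w x" "wit Ord (f y) (f x) k1" "wit Ord (f w) (f x) k2"
  shows "k1 = k2"
proof (rule ccontr)
  assume "k1 \<noteq> k2"
  then consider "k1 < k2" | "k2 < k1" by fastforce
  then show False
  proof cases
    case 1
    then have "wit Ord (f y) (f w) k1" using combine2 assms by blast
    then have "zigzag_less a y w" using rep zl_dest assms by blast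
    then show False using zl_dest assms by blast
  next
    case 2
    then have "wit Ord (f w) (f y) k2" using combine2 assms by blast
    then have "zigzag_less a w y" using rep zl_dest assms by blast
    then show False using zl_dest assms by blast
  qed
qed

definition z0 :: 'i where "z0 = (LEAST t. True)"

lemma z0_le: "z0 \<le> t" unfolding z0_def by (rule Least_le) simp

lemma z0_a: "z0 < a" using ne z0_le le_less_trans by blast

definition m0 :: 'k where "m0 = (SOME k. wit Ord (f (False, z0)) (f (True, z0)) k)"

lemma m0: "wit Ord (f (False, z0)) (f (True, z0)) m0"
  unfolding m0_def by (rule someI_ex) (rule edge, rule zl_same, rule z0_a)

definition good where
  "good x \<longleftrightarrow> m0 < fst (f x) \<and> (\<forall>k<m0. snd (f x) k = snd (f (False, z0)) k)"

lemma good_prop1: "good x \<Longrightarrow> wit Ord (f x) (f y) m0 \<Longrightarrow> good y"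
  unfolding good_def wit_def by auto

lemma good_prop2: "good x \<Longrightarrow> wit Ord (f y) (f x) m0 \<Longrightarrow> good y"
  unfolding good_def wit_def by auto

lemma pred_exists:
  assumes "z0 < i'" shows "\<exists>p<i'. zigzag_less a (False, p) (True, i') \<or> \<not> i' < a"
proof (cases "\<exists>p. succ_of p i'")
  case True
  then obtain p where "succ_of p i'" by blast
  then show ?thesis unfolding zigzag_less_def succ_of_def by (auto simp: succ_of_def)
next
  case False
  then have "is_limit i'" using assms unfolding is_limit_def by blast
  then show ?thesis using assms z0_a unfolding zigzag_less_def by auto
qed

lemma main_ind: "i' < a \<Longrightarrow> good (False, i') \<and> good (True, i') \<and> wit Ord (f (False, i')) (f (True, i')) m0"
proof (induction i' rule: less_induct)
  case (less i')
  show ?case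
  proof (cases "i' = z0")
    case True
    have g0: "good (False, z0)" using m0 unfolding good_def wit_def by simp
    then show ?thesis using True m0 good_prop1 by blast
  next
    case False
    then have "z0 < i'" using z0_le order.not_eq_order_implies_strict by metis
    then obtain p where p: "p < i'" "zigzag_less a (False, p) (True, i')"
      using pred_exists less.prems by blast
    have IH: "good (False, p)" "wit Ord (f (False, p)) (f (True, p)) m0"
      using less.IH p less.prems by auto
    obtain k where k: "wit Ord (f (False, p)) (f (True, i')) k" using edge p by blast
    have "p < a" using p less.prems by auto
    then have "k = m0" using vertex_low[OF p(2) zl_same k(1) IH(2)] by blast
    then have k': "wit Ord (f (False, p)) (f (True, i')) m0" using k by simp
    have gT: "good (True, i')" using good_prop1 IH(1) k' by blast
    obtain k2 where k2: "wit Ord (f (False, i')) (f (True, i')) k2" using edge zl_same less.prems by blast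
    have "k2 = m0" using vertex_high[OF zl_same[OF less.prems] p(2) k2 k'] .
    then have k2': "wit Ord (f (False, i')) (f (True, i')) m0" using k2 by simp
    have "good (False, i')" using good_prop2 gT k2' by blast
    then show ?thesis using gT k2' by blast
  qed
qed

lemma good_all: "snd x < a \<Longrightarrow> good x"
proof -
  obtain b t where x: "x = (b, t)" by (cases x)
  assume "snd x < a"
  then have "t < a" using x by simp
  then show ?thesis using main_ind[of t] x by (cases b) simp_all
qed

lemma samep: "snd x < a \<Longrightarrow> wit Ord (f (False, snd x)) (f (True, snd x)) m0"
  using main_ind[of "snd x"] by simp

lemma swap:
  assumes "good u" "good w" "wit Ord (f u) (f z) m0" "snd (f w) m0 = snd (f u) m0"
  shows "wit Ord (f w) (f z) m0"
proof -
  have a: "\<forall>k<m0. snd (f w) k = snd (f u) k" using assms(1,2) unfolding good_def by simp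
  show ?thesis using assms(2,3,4) a unfolding wit_def good_def by simp
qed

lemma swap2:
  assumes "good u" "good w" "wit Ord (f z) (f u) m0" "snd (f w) m0 = snd (f u) m0"
  shows "wit Ord (f z) (f w) m0"
proof -
  have a: "\<forall>k<m0. snd (f w) k = snd (f u) k" using assms(1,2) unfolding good_def by simp
  show ?thesis using assms(2,3,4) a unfolding wit_def good_def by simp
qed

lemma inj_aux:
  assumes "snd z < a" "snd w < a" "snd (f z) m0 = snd (f w) m0" "z \<noteq> w"
  shows "fst z = fst w \<and> (fst z = False \<longrightarrow> snd w < snd z) \<and> (fst z = True \<longrightarrow> snd z < snd w)"
proof (cases "fst z")
  case False
  define iz where "iz = snd z"
  have z: "z = (False, iz)" using False unfolding iz_def by (cases z) simp
  have iz: "iz < a" using assms(1) unfolding iz_def .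
  have g1: "good (False, iz)" using good_all[of "(False,iz)"] iz by simp
  have g2: "good w" using good_all assms(2) by blast
  have s1: "wit Ord (f (False, iz)) (f (True, iz)) m0" using samep[of "(False,iz)"] iz by simp
  have "wit Ord (f w) (f (True, iz)) m0"
    by (rule swap[OF g1 g2 s1]) (use assms(3) z in simp)
  then have zl: "zigzag_less a w (True, iz)" using rep[of w "(True, iz)"] assms(2) iz by auto
  define iw where "iw = snd w"
  have w: "w = (False, iw)" using zl_dest[OF zl] unfolding iw_def by (cases w) simp
  have "iw \<le> iz" using zl w zl_ord by blast
  moreover have "iw \<noteq> iz" using z w assms(4) by blast
  ultimately show ?thesis using z w by simp
next
  case True
  define iz where "iz = snd z"
  have z: "z = (True, iz)" using True unfolding iz_def by (cases z) simp
  have iz: "iz < a" using assms(1) unfolding iz_def .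
  have g1: "good (True, iz)" using good_all[of "(True,iz)"] iz by simp
  have g2: "good w" using good_all assms(2) by blast
  have s1: "wit Ord (f (False, iz)) (f (True, iz)) m0" using samep[of "(True,iz)"] iz by simp
  have "wit Ord (f (False, iz)) (f w) m0"
    by (rule swap2[OF g1 g2 s1]) (use assms(3) z in simp)
  then have zl: "zigzag_less a (False, iz) w" using rep[of "(False, iz)" w] assms(2) iz by auto
  define iw where "iw = snd w"
  have w: "w = (True, iw)" using zl_dest[OF zl] unfolding iw_def by (cases w) simp
  have "iz \<le> iw" using zl w zl_ord by blast
  moreover have "iw \<noteq> iz" using z w assms(4) by blast
  ultimately show ?thesis using z w by simp
qed

lemma injg: "inj_on (\<lambda>z. snd (f z) m0) (zigzag_dom a)"
proof (rule inj_onI, rule ccontr)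
  fix z w assume zw: "z \<in> zigzag_dom a" "w \<in> zigzag_dom a" "snd (f z) m0 = snd (f w) m0" "z \<noteq> w"
  have s: "snd z < a" "snd w < a" using zw unfolding zigzag_dom_def by auto
  show False using inj_aux[OF s zw(3,4)] inj_aux[OF s(2,1) zw(3)[symmetric]] zw(4) by auto
qed

lemma m0_j: "m0 < j"
proof -
  have "(False, z0) \<in> zigzag_dom a" using z0_a inZ by auto
  then have "f (False, z0) \<in> next_dom i j D" using qr unfolding questionable_rep_def by auto
  then obtain l where "is_word D l (f (False, z0))" "l < j" unfolding next_dom_def by blast
  then show ?thesis using m0 unfolding is_word_def wit_def by auto
qed

lemma img: "(\<lambda>z. snd (f z) m0) ` zigzag_dom a \<subseteq> D m0"
proof
  fix y assume "y \<in> (\<lambda>z. snd (f z) m0) ` zigzag_dom a"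
  then obtain z where z: "z \<in> zigzag_dom a" "y = snd (f z) m0" by blast
  have "f z \<in> next_dom i j D" using z qr unfolding questionable_rep_def by auto
  moreover have "m0 < fst (f z)" using good_all z unfolding good_def zigzag_dom_def by auto
  ultimately obtain l where "is_word D l (f z)" "m0 < fst (f z)" unfolding next_dom_def by blast
  then show "y \<in> D m0" using z(2) unfolding is_word_def by simp
qed

lemma final: "width_at_least j D (zigzag_dom a)"
proof -
  have "ordLeq2 (card_of (zigzag_dom a)) (card_of (D m0))" using card_of_ordLeq injg img by blast
  then show ?thesis unfolding width_at_least_def using m0_j ordLess_ordLeq_trans by metis
qed

end

theorem lemma7p1:
  fixes a :: "'i::wellorder"
    and i j :: "'k::wellorder"
    and D :: "'k \<Rightarrow> 'a set"
    and Ord :: "'k \<Rightarrow> 'a rel"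
    and f :: "bool \<times> 'i \<Rightarrow> 'k \<times> ('k \<Rightarrow> 'a)"
  assumes "\<exists>m. m < a"
    and "questionable_rep (zigzag_dom a) (zigzag_less a) i j D Ord f"
  shows "width_at_least j D (zigzag_dom a)"
  using zz.final[of a i j D Ord f] assms unfolding zz_def by blast

end
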